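(* Let $b$ be a non-extreme point of the closed unit ball of $H^\infty$, and let $\mathcal H(b)$ be the de Branges–Rovnyak space, i.e. the reproducing kernel Hilbert space on the unit disk $\mathbb D$ with kernel $K(z,w)=\frac{1-b(z)\overline{b(w)}}{1-z\overline w}$. For $j\ge0$ let $k_{0,j}(z):=\frac1{j!}\frac{\partial^j}{\partial\overline w^j}K(z,w)\big|_{w=0}$. Then $\inf_{j\ge0}\|k_{0,j}\|_{\mathcal H(b)}>0$.
   Context: $H^\infty$ is the space of bounded holomorphic functions on $\mathbb D$ with sup-norm. $b$ non-extreme in the unit ball of $H^\infty$ is equivalent to $\log(1-|b|^2)\in L^1(\mathbb T)$ for its boundary values; in this case $\mathcal H(b)$ contains the polynomials, and $k_{0,j}\in\mathcal H(b)$ satisfies $\langle h,k_{0,j}\rangle=h^{(j)}(0)/j!$. *)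

theory Defs
  imports "HOL-Analysis.Analysis"
begin

definition Hinf_ball :: "(complex \<Rightarrow> complex) set" where
  "Hinf_ball = {f. f holomorphic_on ball 0 1 \<and> (\<forall>z\<in>ball 0 1. norm (f z) \<le> 1)}"

text \<open>Extreme point of the unit ball of H-infinity (functions identified on the disc):
  b is not the midpoint of two distinct elements of the ball.\<close>
definition Hinf_extreme :: "(complex \<Rightarrow> complex) \<Rightarrow> bool" where
  "Hinf_extreme b \<longleftrightarrow> b \<in> Hinf_ball \<and>
     \<not> (\<exists>g\<in>Hinf_ball. \<exists>h\<in>Hinf_ball. (\<exists>z\<in>ball 0 1. g z \<noteq> h z) \<and>
          (\<forall>z\<in>ball 0 1. b z = (g z + h z) / 2))"

definition dBR_kernel :: "(complex \<Rightarrow> complex) \<Rightarrow> complex \<Rightarrow> complex \<Rightarrow> complex" where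
  "dBR_kernel b z w = (1 - b z * cnj (b w)) / (1 - z * cnj w)"

definition pos_kernel_disc :: "(complex \<Rightarrow> complex \<Rightarrow> complex) \<Rightarrow> bool" where
  "pos_kernel_disc M \<longleftrightarrow> (\<forall>(n::nat) (p::nat \<Rightarrow> complex) (c::nat \<Rightarrow> complex).
      (\<forall>i<n. p i \<in> ball 0 1) \<longrightarrow>
      (let s = (\<Sum>i<n. \<Sum>j<n. c i * cnj (c j) * M (p i) (p j)) in Im s = 0 \<and> Re s \<ge> 0))"

text \<open>RKHS with kernel K on the disc (Aronszajn): f belongs with norm at most C iff
  C^2 K(z,w) - f(z) conj(f(w)) is a positive kernel; the norm is the least such C.\<close>
definition rk_admissible :: "(complex \<Rightarrow> complex \<Rightarrow> complex) \<Rightarrow> (complex \<Rightarrow> complex) \<Rightarrow> real set" where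
  "rk_admissible K f = {C. C \<ge> 0 \<and>
       pos_kernel_disc (\<lambda>z w. complex_of_real (C\<^sup>2) * K z w - f z * cnj (f w))}"

definition rkhs_space :: "(complex \<Rightarrow> complex \<Rightarrow> complex) \<Rightarrow> (complex \<Rightarrow> complex) set" where
  "rkhs_space K = {f. rk_admissible K f \<noteq> {}}"

definition rkhs_norm :: "(complex \<Rightarrow> complex \<Rightarrow> complex) \<Rightarrow> (complex \<Rightarrow> complex) \<Rightarrow> real" where
  "rkhs_norm K f = Inf (rk_admissible K f)"

text \<open>k_{0,j}(z) = (1/j!) d^j/d(conj w)^j K(z,w) at w = 0; as a function of u = conj w
  the kernel is (1 - b z * conj (b (conj u))) / (1 - z u).\<close>
definition k0j :: "(complex \<Rightarrow> complex) \<Rightarrow> nat \<Rightarrow> complex \<Rightarrow> complex" where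
  "k0j b j z = (deriv ^^ j) (\<lambda>u. dBR_kernel b z (cnj u)) 0 / of_nat (fact j)"

end

theory Submission
  imports Defs "HOL-Complex_Analysis.Complex_Analysis" "HOL-Computational_Algebra.Polynomial"
begin

definition om :: "nat \<Rightarrow> complex" where "om N = exp (2 * of_real pi * \<i> / of_nat N)"

lemma om_pow: "om N ^ k = exp (2 * of_real pi * \<i> * of_nat k / of_nat N)"
  unfolding om_def by (simp add: exp_of_nat_mult[symmetric] mult_ac)

lemma om_norm [simp]: "norm (om N ^ k) = 1"
  unfolding om_pow by (simp add: norm_exp_eq_Re)

lemma norm1_cnj: "norm z = 1 \<Longrightarrow> cnj z * z = 1"
  by (metis complex_norm_square mult.commute of_real_1 power_one)

lemma om_norm1 [simp]: "norm (om N) = 1"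
  using om_norm[of N 1] by simp

lemma om_cnj1 [simp]: "cnj (om N) * om N = 1" "om N * cnj (om N) = 1"
  using norm1_cnj[OF om_norm1[of N]] by (auto simp: mult.commute)

lemma om_cnj_pow [simp]: "cnj (om N) ^ k * om N ^ k = 1" "om N ^ k * cnj (om N) ^ k = 1"
  by (simp_all flip: power_mult_distrib)

lemma om_pow_N: "N \<ge> 1 \<Longrightarrow> om N ^ N = 1"
  unfolding om_pow using complex_root_unity_eq_1[of N N] by simp

lemma root_orth:
  assumes N: "N \<ge> 1" and m: "m < N" and m': "m' < N"
  shows "(\<Sum>l<N. (om N ^ m * cnj (om N) ^ m')^l) = (if m = m' then of_nat N else 0)"
proof (cases "m = m'")
  case True
  have "om N ^ m * cnj (om N) ^ m' = 1" unfolding True by (rule om_cnj_pow(2))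
  then show ?thesis using True by simp
next
  case False
  define q where "q = om N ^ m * cnj (om N) ^ m'"
  have q1: "q \<noteq> 1"
  proof
    assume "q = 1"
    then have "om N ^ m * (cnj (om N) ^ m' * om N ^ m') = om N ^ m'"
      unfolding q_def by (metis mult.assoc mult_1)
    then have "om N ^ m = om N ^ m'" by simp
    then have "m mod N = m' mod N"
      unfolding om_pow using complex_root_unity_eq[OF N] by simp
    with m m' False show False by simp
  qed
  have e1: "(om N ^ k) ^ N = 1" for k
  proof -
    have "(om N ^ k) ^ N = (om N ^ N) ^ k" by (simp only: power_mult[symmetric] mult.commute)
    then show ?thesis using om_pow_N[OF N] by simp
  qed
  have qN: "q ^ N = 1"
    unfolding q_def power_mult_distrib complex_cnj_power[symmetric] power_mult[symmetric] mult.commute[of m' N] mult.commute[of m N]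
    unfolding power_mult om_pow_N[OF N] by simp
  have "(\<Sum>l<N. q^l) = (q ^ N - 1) / (q - 1)"
    using q1 by (rule geometric_sum)
  then show ?thesis using qN False by (simp add: q_def)
qed

lemma complex_norm_sq: "complex_of_real ((cmod w)^2) = w * cnj w"
  by (metis complex_norm_square of_real_power)

lemma parseval:
  fixes p :: "complex poly"
  assumes N: "degree p < N"
  shows "(\<Sum>l<N. (cmod (poly p (om N ^ l)))^2) = real N * (\<Sum>m<N. (cmod (coeff p m))^2)"
proof -
  have N1: "N \<ge> 1" using N by simp
  have pz: "poly p z = (\<Sum>m<N. coeff p m * z^m)" for z
  proof -
    have "poly p z = (\<Sum>m\<le>degree p. coeff p m * z^m)" by (rule poly_altdef)
    also have "\<dots> = (\<Sum>m<N. coeff p m * z^m)"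
      using N by (intro sum.mono_neutral_left) (auto simp: coeff_eq_0)
    finally show ?thesis .
  qed
  have "complex_of_real (\<Sum>l<N. (cmod (poly p (om N ^ l)))^2)
      = (\<Sum>l<N. poly p (om N ^ l) * cnj (poly p (om N ^ l)))"
    by (simp only: of_real_sum complex_norm_sq)
  also have "\<dots> = (\<Sum>l<N. \<Sum>m<N. \<Sum>m'<N. coeff p m * cnj (coeff p m') * (om N ^ m * cnj (om N ^ m'))^l)"
    unfolding pz cnj_sum sum_product
    by (intro sum.cong refl) (simp add: power_mult_distrib mult_ac power_mult[symmetric])
  also have "\<dots> = (\<Sum>m<N. \<Sum>l<N. \<Sum>m'<N. coeff p m * cnj (coeff p m') * (om N ^ m * cnj (om N ^ m'))^l)"
    by (rule sum.swap)
  also have "\<dots> = (\<Sum>m<N. \<Sum>m'<N. \<Sum>l<N. coeff p m * cnj (coeff p m') * (om N ^ m * cnj (om N ^ m'))^l)"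
    by (rule sum.cong[OF refl], rule sum.swap)
  also have "\<dots> = (\<Sum>m<N. \<Sum>m'<N. coeff p m * cnj (coeff p m') * (\<Sum>l<N. (om N ^ m * cnj (om N ^ m'))^l))"
    by (simp only: sum_distrib_left)
  also have "\<dots> = (\<Sum>m<N. of_nat N * (coeff p m * cnj (coeff p m)))"
  proof (rule sum.cong[OF refl])
    fix m assume m: "m \<in> {..<N}"
    have "(\<Sum>m'<N. coeff p m * cnj (coeff p m') * (\<Sum>l<N. (om N ^ m * cnj (om N ^ m'))^l))
       = (\<Sum>m'<N. if m = m' then coeff p m * cnj (coeff p m') * of_nat N else 0)"
      using m by (intro sum.cong refl) (auto simp: root_orth[OF N1])
    also have "\<dots> = of_nat N * (coeff p m * cnj (coeff p m))" using m by simp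
    finally show "(\<Sum>m'<N. coeff p m * cnj (coeff p m') * (\<Sum>l<N. (om N ^ m * cnj (om N ^ m'))^l)) = of_nat N * (coeff p m * cnj (coeff p m))" .
  qed
  also have "\<dots> = complex_of_real (real N * (\<Sum>m<N. (cmod (coeff p m))^2))"
    by (simp only: of_real_mult of_real_of_nat_eq of_real_sum complex_norm_square sum_distrib_left)
  finally show ?thesis by (simp only: of_real_eq_iff)
qed


lemma toeplitz_contr:
  fixes \<gamma> :: "nat \<Rightarrow> complex" and F :: "complex \<Rightarrow> complex"
  assumes sm: "\<And>z. norm z < 1 \<Longrightarrow> (\<lambda>k. \<gamma> k * z^k) sums F z"
      and bd: "\<And>z. norm z < 1 \<Longrightarrow> norm (F z) \<le> 1"
  shows "(\<Sum>m\<le>J. (cmod (\<Sum>i\<le>m. \<gamma> i * y (m-i)))^2) \<le> (\<Sum>n\<le>J. (cmod (y n))^2)"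
proof -
  define T where "T w = (\<Sum>m\<le>J. (cmod (\<Sum>i\<le>m. \<gamma> i * w^i * y (m-i)))^2)" for w :: complex
  define Y2 where "Y2 = (\<Sum>n\<le>J. (cmod (y n))^2)"
  have Tr: "T (of_real r) \<le> Y2" if r: "0 < r" "r < 1" for r
  proof -
    have "norm (complex_of_real ((1+r)/2)) < 1" using r by (subst norm_of_real) simp
    then have "summable (\<lambda>k. \<gamma> k * complex_of_real ((1+r)/2) ^ k)"
      using sm sums_summable by blast
    moreover have "norm (complex_of_real r) < norm (complex_of_real ((1+r)/2))"
      using r by (simp only: norm_of_real) simp
    ultimately have summ: "summable (\<lambda>k. norm (\<gamma> k * of_real r ^ k))"
      by (rule powser_insidea)
    define S where "S = (\<Sum>k. norm (\<gamma> k * of_real r ^ k))"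
    define a where "a L = S - (\<Sum>k<Suc L. norm (\<gamma> k * of_real r^k))" for L
    have "(\<lambda>L. \<Sum>k<Suc L. norm (\<gamma> k * of_real r^k)) \<longlonglongrightarrow> S"
      unfolding S_def using summable_LIMSEQ[OF summ] by (rule LIMSEQ_Suc)
    then have "(\<lambda>L. S - (\<Sum>k<Suc L. norm (\<gamma> k * of_real r^k))) \<longlonglongrightarrow> S - S"
      by (intro tendsto_diff tendsto_const)
    then have alim: "a \<longlonglongrightarrow> 0" by (simp add: a_def[abs_def])
    have anonneg: "a L \<ge> 0" for L
    proof -
      have "(\<Sum>k<Suc L. norm (\<gamma> k * of_real r^k)) \<le> S"
        unfolding S_def by (rule sum_le_suminf[OF summ]) auto
      then show ?thesis by (simp add: a_def)
    qed
    have pbound: "norm (\<Sum>k\<le>L. \<gamma> k * (of_real r * z)^k) \<le> 1 + a L" if z: "norm z = 1" for z L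
    proof -
      define f where "f k = \<gamma> k * (of_real r * z)^k" for k
      have nf: "norm (f k) = norm (\<gamma> k * of_real r ^ k)" for k
        using z r by (simp add: f_def norm_mult norm_power)
      have rz: "norm (of_real r * z) < 1" using z r by (simp add: norm_mult)
      have sf: "f sums F (of_real r * z)" unfolding f_def by (rule sm[OF rz])
      have sumf: "summable f" using sf by (rule sums_summable)
      have snf: "summable (\<lambda>k. norm (f k))" using summ by (simp add: nf)
      have snf2: "summable (\<lambda>n. norm (f (n + Suc L)))"
        using snf by (rule summable_ignore_initial_segment)
      have eq: "F (of_real r * z) = (\<Sum>n. f (n + Suc L)) + (\<Sum>k<Suc L. f k)"
        using suminf_split_initial_segment[OF sumf, of "Suc L"] sf by (simp add: sums_iff)
      have "norm (\<Sum>n. f (n + Suc L)) \<le> (\<Sum>n. norm (f (n + Suc L)))"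
        by (rule summable_norm[OF snf2])
      also have "\<dots> = a L"
        using suminf_split_initial_segment[OF summ, of "Suc L"] unfolding a_def S_def by (simp add: nf)
      finally have t: "norm (\<Sum>n. f (n + Suc L)) \<le> a L" .
      have "(\<Sum>k\<le>L. \<gamma> k * (of_real r * z)^k) = (\<Sum>k<Suc L. f k)"
        by (simp add: f_def lessThan_Suc_atMost)
      also have "\<dots> = F (of_real r * z) - (\<Sum>n. f (n + Suc L))" using eq by simp
      finally have "norm (\<Sum>k\<le>L. \<gamma> k * (of_real r * z)^k) \<le> norm (F (of_real r * z)) + norm (\<Sum>n. f (n + Suc L))"
        by (simp add: norm_triangle_ineq4)
      then show ?thesis using bd[OF rz] t by linarith
    qed
    have main: "T (of_real r) \<le> (1 + a L)^2 * Y2" if L: "L \<ge> J" for L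
    proof -
      define pL where "pL = (\<Sum>k\<le>L. monom (\<gamma> k * of_real r ^ k) k)"
      define Yp where "Yp = (\<Sum>n\<le>J. monom (y n) n)"
      define N where "N = L + J + 1"
      have cp: "coeff pL k = (if k \<le> L then \<gamma> k * of_real r^k else 0)" for k
        by (simp add: pL_def coeff_sum coeff_monom)
      have cY: "coeff Yp n = (if n \<le> J then y n else 0)" for n
        by (simp add: Yp_def coeff_sum coeff_monom)
      have dp: "degree pL \<le> L" unfolding pL_def
        by (rule degree_sum_le) (auto intro: order.trans[OF degree_monom_le])
      have dY: "degree Yp \<le> J" unfolding Yp_def
        by (rule degree_sum_le) (auto intro: order.trans[OF degree_monom_le])
      have dP: "degree (pL * Yp) < N"
        using degree_mult_le[of pL Yp] dp dY unfolding N_def by linarith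
      have dY': "degree Yp < N" using dY unfolding N_def by linarith
      have ppL: "poly pL z = (\<Sum>k\<le>L. \<gamma> k * (of_real r * z)^k)" for z
        by (simp add: pL_def poly_sum poly_monom power_mult_distrib mult_ac)
      have Npos: "real N > 0" unfolding N_def by simp
      have "T (of_real r) = (\<Sum>m\<le>J. (cmod (coeff (pL * Yp) m))^2)"
        unfolding T_def
      proof (rule sum.cong[OF refl])
        fix m assume "m \<in> {..J}"
        then have m: "m \<le> J" by simp
        have "coeff (pL * Yp) m = (\<Sum>i\<le>m. \<gamma> i * of_real r ^ i * y (m-i))"
          unfolding coeff_mult using m L by (intro sum.cong refl) (auto simp: cp cY)
        then show "(cmod (\<Sum>i\<le>m. \<gamma> i * complex_of_real r ^ i * y (m - i)))\<^sup>2 = (cmod (coeff (pL * Yp) m))\<^sup>2"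
          by simp
      qed
      also have "\<dots> \<le> (\<Sum>m<N. (cmod (coeff (pL * Yp) m))^2)"
        by (rule sum_mono2) (auto simp: N_def)
      also have "\<dots> = (\<Sum>l<N. (cmod (poly (pL * Yp) (om N ^ l)))^2) / real N"
        using parseval[OF dP] Npos by simp
      also have "\<dots> = (\<Sum>l<N. (cmod (poly pL (om N ^ l)))^2 * (cmod (poly Yp (om N ^ l)))^2) / real N"
        by (simp add: norm_mult power_mult_distrib)
      also have "\<dots> \<le> (\<Sum>l<N. (1 + a L)^2 * (cmod (poly Yp (om N ^ l)))^2) / real N"
      proof (intro divide_right_mono sum_mono mult_right_mono)
        fix l
        show "(cmod (poly pL (om N ^ l)))\<^sup>2 \<le> (1 + a L)\<^sup>2"
          unfolding ppL by (intro power_mono pbound) auto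
      qed auto
      also have "\<dots> = (1 + a L)^2 * ((\<Sum>l<N. (cmod (poly Yp (om N ^ l)))^2) / real N)"
        by (simp add: sum_distrib_left)
      also have "(\<Sum>l<N. (cmod (poly Yp (om N ^ l)))^2) / real N = (\<Sum>m<N. (cmod (coeff Yp m))^2)"
        using parseval[OF dY'] Npos by simp
      also have "(\<Sum>m<N. (cmod (coeff Yp m))^2) = Y2"
        unfolding Y2_def cY
        by (rule sum.mono_neutral_cong_right) (auto simp: N_def)
      finally show ?thesis .
    qed
    have "(\<lambda>L. (1 + a L)^2 * Y2) \<longlonglongrightarrow> (1 + 0)^2 * Y2"
      by (intro tendsto_intros alim)
    then have "(\<lambda>L. (1 + a L)^2 * Y2) \<longlonglongrightarrow> Y2" by simp
    then show ?thesis
      by (rule LIMSEQ_le_const) (use main in auto)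
  qed
  have lim: "((\<lambda>r. T (of_real r)) \<longlongrightarrow> T (of_real 1)) (at_left 1)"
    unfolding T_def by (intro tendsto_intros)
  have "T (of_real 1) \<le> Y2"
  proof (rule tendsto_le[OF trivial_limit_at_left_real tendsto_const lim])
    show "\<forall>\<^sub>F r in at_left 1. T (complex_of_real r) \<le> Y2"
    proof -
      have "eventually (\<lambda>x. x \<in> {0<..<1}) (at_left (1::real))"
        by (rule eventually_at_left_real) simp
      then show ?thesis by eventually_elim (auto intro: Tr)
    qed
  qed
  then show ?thesis unfolding T_def Y2_def by simp
qed

definition tc :: "(complex \<Rightarrow> complex) \<Rightarrow> nat \<Rightarrow> complex" where
  "tc f n = (deriv ^^ n) f 0 / fact n"

lemma tc_sums:
  assumes "f holomorphic_on ball 0 1" "norm z < 1"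
  shows "(\<lambda>n. tc f n * z^n) sums f z"
  using holomorphic_power_series[OF assms(1), of z] assms(2) by (simp add: tc_def)

lemma k0j_formula:
  assumes hb: "b holomorphic_on ball 0 1"
  shows "k0j b j z = z^j - b z * (\<Sum>i\<le>j. cnj (tc b i) * z^(j-i))"
proof -
  define Bs where "Bs = Abs_fps (\<lambda>n. cnj (tc b n))"
  define Gz where "Gz = Abs_fps (\<lambda>n. z^n)"
  have eB: "(\<lambda>u. cnj (b (cnj u))) has_fps_expansion Bs"
  proof (rule has_fps_expansionI)
    have "eventually (\<lambda>u. u \<in> ball 0 1) (nhds (0::complex))"
      by (rule eventually_nhds_in_open) auto
    then show "eventually (\<lambda>u. (\<lambda>n. fps_nth Bs n * u^n) sums cnj (b (cnj u))) (nhds 0)"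
    proof eventually_elim
      case (elim u)
      then have "(\<lambda>n. tc b n * (cnj u)^n) sums b (cnj u)" by (intro tc_sums hb) auto
      then have "(\<lambda>n. cnj (tc b n * (cnj u)^n)) sums cnj (b (cnj u))" by (simp only: sums_cnj)
      then show ?case by (simp add: Bs_def)
    qed
  qed
  have eG: "(\<lambda>u. inverse (1 - z*u)) has_fps_expansion Gz"
  proof (rule has_fps_expansionI)
    have nz: "0 < norm z + 1" using norm_ge_zero[of z] by linarith
    have "eventually (\<lambda>u. u \<in> ball 0 (1/(norm z + 1))) (nhds (0::complex))"
      using nz by (intro eventually_nhds_in_open) auto
    then show "eventually (\<lambda>u. (\<lambda>n. fps_nth Gz n * u^n) sums inverse (1 - z*u)) (nhds 0)"
    proof eventually_elim
      case (elim u)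
      then have "norm u < 1 / (norm z + 1)" by simp
      then have u: "norm u * (norm z + 1) < 1"
        by (simp only: pos_less_divide_eq[OF nz])
      have "norm z * norm u \<le> norm u * (norm z + 1)" by (simp add: algebra_simps)
      with u have "norm (z*u) < 1" by (simp add: norm_mult)
      then have "(\<lambda>n. (z*u)^n) sums (1 / (1 - z*u))" by (rule geometric_sums)
      then show ?case by (simp add: Gz_def power_mult_distrib inverse_eq_divide)
    qed
  qed
  have e: "(\<lambda>u. (1 - b z * cnj (b (cnj u))) * inverse (1 - z*u)) has_fps_expansion (1 - fps_const (b z) * Bs) * Gz"
    by (intro has_fps_expansion_mult has_fps_expansion_diff has_fps_expansion_1 has_fps_expansion_cmult_left eB eG)
  have "(\<lambda>u. dBR_kernel b z (cnj u)) = (\<lambda>u. (1 - b z * cnj (b (cnj u))) * inverse (1 - z*u))"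
    by (auto simp: dBR_kernel_def divide_inverse)
  with e have e2: "(\<lambda>u. dBR_kernel b z (cnj u)) has_fps_expansion (1 - fps_const (b z) * Bs) * Gz"
    by simp
  have "k0j b j z = fps_nth ((1 - fps_const (b z) * Bs) * Gz) j"
    unfolding k0j_def fps_nth_fps_expansion[OF e2] by simp
  also have "\<dots> = (\<Sum>i\<le>j. ((if i = 0 then 1 else 0) - b z * cnj (tc b i)) * z^(j-i))"
  proof -
    have c1: "fps_nth (1 - fps_const (b z) * Bs) i = (if i = 0 then 1 else 0) - b z * cnj (tc b i)" for i
      by (simp add: Bs_def fps_mult_left_const_nth)
    show ?thesis by (simp only: fps_mult_nth atLeast0AtMost c1) (simp add: Gz_def)
  qed
  also have "\<dots> = (\<Sum>i\<le>j. (if i = 0 then 1 else 0) * z^(j-i)) - b z * (\<Sum>i\<le>j. cnj (tc b i) * z^(j-i))"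
    by (simp only: left_diff_distrib sum_subtractf sum_distrib_left mult.assoc)
  also have "(\<Sum>i\<le>j. (if i = 0 then 1 else 0) * z^(j-i)) = (\<Sum>i\<le>j. if i = 0 then z^j else 0)"
    by (rule sum.cong) auto
  also have "\<dots> = z^j" by simp
  finally show ?thesis .
qed

lemma geo_form:
  fixes p w :: "nat \<Rightarrow> complex"
  assumes p: "\<And>i. i < n \<Longrightarrow> norm (p i) < 1"
  shows "(\<lambda>m. complex_of_real ((cmod (\<Sum>i<n. w i * p i ^ m))^2))
           sums (\<Sum>i<n. \<Sum>k<n. w i * cnj (w k) / (1 - p i * cnj (p k)))"
proof -
  have eq: "complex_of_real ((cmod (\<Sum>i<n. w i * p i ^ m))^2)
       = (\<Sum>i<n. \<Sum>k<n. w i * cnj (w k) * (p i * cnj (p k))^m)" for m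
    unfolding complex_norm_sq cnj_sum sum_product
    by (intro sum.cong refl) (simp only: complex_cnj_mult complex_cnj_power power_mult_distrib mult_ac)
  have "(\<lambda>m. \<Sum>i<n. \<Sum>k<n. w i * cnj (w k) * (p i * cnj (p k))^m)
           sums (\<Sum>i<n. \<Sum>k<n. w i * cnj (w k) * (1 / (1 - p i * cnj (p k))))"
  proof (intro sums_sum sums_mult geometric_sums)
    fix i k assume "i \<in> {..<n}" "k \<in> {..<n}"
    then have "norm (p i) < 1" "norm (p k) < 1" using p by auto
    moreover have "norm (p i) * norm (p k) \<le> norm (p i) * 1"
      using \<open>norm (p k) < 1\<close> by (intro mult_left_mono) auto
    ultimately have "norm (p i) * norm (p k) < 1" by linarith
    then show "norm (p i * cnj (p k)) < 1" by (simp add: norm_mult)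
  qed
  then show ?thesis unfolding eq by simp
qed

definition xs :: "nat \<Rightarrow> (nat \<Rightarrow> complex) \<Rightarrow> (nat \<Rightarrow> complex) \<Rightarrow> nat \<Rightarrow> complex" where
  "xs n c p m = (\<Sum>i<n. c i * p i ^ m)"

definition vs :: "(complex \<Rightarrow> complex) \<Rightarrow> nat \<Rightarrow> (nat \<Rightarrow> complex) \<Rightarrow> (nat \<Rightarrow> complex) \<Rightarrow> nat \<Rightarrow> complex" where
  "vs b n c p m = (\<Sum>i<n. c i * b (p i) * p i ^ m)"

lemma Qid:
  assumes p: "\<And>i. i < n \<Longrightarrow> norm (p i) < 1"
  shows "summable (\<lambda>m. (cmod (xs n c p m))^2)" "summable (\<lambda>m. (cmod (vs b n c p m))^2)"
    "(\<Sum>i<n. \<Sum>k<n. c i * cnj (c k) * dBR_kernel b (p i) (p k))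
       = of_real ((\<Sum>m. (cmod (xs n c p m))^2) - (\<Sum>m. (cmod (vs b n c p m))^2))"
proof -
  have sx: "(\<lambda>m. complex_of_real ((cmod (xs n c p m))^2))
           sums (\<Sum>i<n. \<Sum>k<n. c i * cnj (c k) / (1 - p i * cnj (p k)))"
    unfolding xs_def by (rule geo_form[OF p])
  have sv: "(\<lambda>m. complex_of_real ((cmod (vs b n c p m))^2))
           sums (\<Sum>i<n. \<Sum>k<n. (c i * b (p i)) * cnj (c k * b (p k)) / (1 - p i * cnj (p k)))"
    unfolding vs_def by (rule geo_form[OF p])
  show s1: "summable (\<lambda>m. (cmod (xs n c p m))^2)"
    using sums_summable[OF sx] by (simp only: summable_complex_of_real)
  show s2: "summable (\<lambda>m. (cmod (vs b n c p m))^2)"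
    using sums_summable[OF sv] by (simp only: summable_complex_of_real)
  have "(\<Sum>i<n. \<Sum>k<n. c i * cnj (c k) * dBR_kernel b (p i) (p k))
      = (\<Sum>i<n. \<Sum>k<n. c i * cnj (c k) / (1 - p i * cnj (p k)))
        - (\<Sum>i<n. \<Sum>k<n. (c i * b (p i)) * cnj (c k * b (p k)) / (1 - p i * cnj (p k)))"
    unfolding sum_subtractf[symmetric]
    by (intro sum.cong refl) (simp add: dBR_kernel_def diff_divide_distrib right_diff_distrib mult_ac)
  also have "\<dots> = (\<Sum>m. complex_of_real ((cmod (xs n c p m))^2)) - (\<Sum>m. complex_of_real ((cmod (vs b n c p m))^2))"
    using sx sv by (simp add: sums_iff)
  also have "\<dots> = of_real ((\<Sum>m. (cmod (xs n c p m))^2) - (\<Sum>m. (cmod (vs b n c p m))^2))"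
    by (simp only: of_real_diff suminf_of_real[OF s1] suminf_of_real[OF s2])
  finally show "(\<Sum>i<n. \<Sum>k<n. c i * cnj (c k) * dBR_kernel b (p i) (p k))
       = of_real ((\<Sum>m. (cmod (xs n c p m))^2) - (\<Sum>m. (cmod (vs b n c p m))^2))" .
qed

lemma Gid:
  assumes hb: "b holomorphic_on ball 0 1"
  shows "(\<Sum>i<n. c i * k0j b j (p i)) = xs n c p j - (\<Sum>l\<le>j. cnj (tc b l) * vs b n c p (j-l))"
proof -
  have "(\<Sum>i<n. c i * k0j b j (p i))
      = (\<Sum>i<n. c i * p i ^ j) - (\<Sum>i<n. \<Sum>l\<le>j. cnj (tc b l) * (c i * b (p i) * p i ^ (j-l)))"
    unfolding k0j_formula[OF hb] sum_subtractf[symmetric]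
    by (intro sum.cong refl) (simp add: right_diff_distrib sum_distrib_left mult_ac)
  also have "(\<Sum>i<n. \<Sum>l\<le>j. cnj (tc b l) * (c i * b (p i) * p i ^ (j-l)))
      = (\<Sum>l\<le>j. \<Sum>i<n. cnj (tc b l) * (c i * b (p i) * p i ^ (j-l)))"
    by (rule sum.swap)
  also have "\<dots> = (\<Sum>l\<le>j. cnj (tc b l) * vs b n c p (j-l))"
    unfolding vs_def by (simp only: sum_distrib_left)
  finally show ?thesis unfolding xs_def .
qed

lemma sum_rev_atMost: "(\<Sum>i\<le>n. f i) = (\<Sum>i\<le>n. f (n - i))" for f :: "nat \<Rightarrow> 'a::comm_monoid_add"
  by (rule sum.reindex_bij_witness[where i="\<lambda>i. n - i" and j="\<lambda>i. n - i"]) auto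

lemma mult_cnj_sq: "z * cnj z = (complex_of_real (cmod z))^2"
  by (metis complex_norm_square of_real_power)

lemma cmod_sq_add:
  "(cmod (a + t*b))^2 = (cmod a)^2 + 2 * Re (cnj t * (a * cnj b)) + (cmod t)^2 * (cmod b)^2"
  unfolding cmod_power2 by (simp add: power2_eq_square algebra_simps)

lemma cmod_parallelogram:
  "(cmod (a + c))^2 + (cmod (a - c))^2 = 2 * (cmod a)^2 + 2 * (cmod c)^2"
  unfolding cmod_power2 by (simp add: power2_eq_square algebra_simps)

lemma cs_form:
  fixes u v U V :: "nat \<Rightarrow> complex" and A :: "nat set"
  assumes pos: "\<And>t. 0 \<le> (\<Sum>n\<in>A. (cmod (u n + t * v n))^2) - (\<Sum>n\<in>A. (cmod (U n + t * V n))^2)"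
    and s: "s = (\<Sum>n\<in>A. (cmod (v n))^2) - (\<Sum>n\<in>A. (cmod (V n))^2)" "s > 0"
  shows "(cmod ((\<Sum>n\<in>A. u n * cnj (v n)) - (\<Sum>n\<in>A. U n * cnj (V n))))^2
          \<le> s * ((\<Sum>n\<in>A. (cmod (u n))^2) - (\<Sum>n\<in>A. (cmod (U n))^2))"
proof -
  define \<beta> where "\<beta> = (\<Sum>n\<in>A. u n * cnj (v n)) - (\<Sum>n\<in>A. U n * cnj (V n))"
  define q where "q = (\<Sum>n\<in>A. (cmod (u n))^2) - (\<Sum>n\<in>A. (cmod (U n))^2)"
  have e1: "(\<Sum>n\<in>A. (cmod (u n + t * v n))^2) = (\<Sum>n\<in>A. (cmod (u n))^2)
        + 2 * Re (cnj t * (\<Sum>n\<in>A. u n * cnj (v n))) + (cmod t)^2 * (\<Sum>n\<in>A. (cmod (v n))^2)" for t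
    by (simp only: cmod_sq_add sum.distrib sum_distrib_left Re_sum)
  have e2: "(\<Sum>n\<in>A. (cmod (U n + t * V n))^2) = (\<Sum>n\<in>A. (cmod (U n))^2)
        + 2 * Re (cnj t * (\<Sum>n\<in>A. U n * cnj (V n))) + (cmod t)^2 * (\<Sum>n\<in>A. (cmod (V n))^2)" for t
    by (simp only: cmod_sq_add sum.distrib sum_distrib_left Re_sum)
  have expand: "(\<Sum>n\<in>A. (cmod (u n + t * v n))^2) - (\<Sum>n\<in>A. (cmod (U n + t * V n))^2)
      = q + 2 * Re (cnj t * \<beta>) + (cmod t)^2 * s" for t
    unfolding e1 e2 q_def \<beta>_def s(1)
    by (simp only: right_diff_distrib minus_complex.sel(1))
  define t where "t = - \<beta> / complex_of_real s"
  have "0 \<le> q + 2 * Re (cnj t * \<beta>) + (cmod t)^2 * s" using pos[of t] expand[of t] by simp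
  also have "cnj t * \<beta> = - of_real ((cmod \<beta>)^2 / s)"
    unfolding t_def using s(2) by (simp add: mult_cnj_sq mult.commute)
  also have "(cmod t)^2 = (cmod \<beta>)^2 / s^2"
    unfolding t_def using s(2) by (simp add: norm_divide power_divide)
  finally have "0 \<le> q - (cmod \<beta>)^2 / s" using s(2) by (simp add: power2_eq_square field_simps)
  then have "(cmod \<beta>)^2 / s \<le> q" by simp
  then show ?thesis unfolding \<beta>_def q_def using s(2) by (simp add: pos_divide_le_eq mult.commute)
qed

definition SJ :: "(nat \<Rightarrow> complex) \<Rightarrow> nat \<Rightarrow> (nat \<Rightarrow> complex) \<Rightarrow> nat \<Rightarrow> complex" where
  "SJ \<gamma> J y m = (\<Sum>k\<le>J-m. \<gamma> k * y (m+k))"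

lemma SJ_contr:
  fixes \<gamma> :: "nat \<Rightarrow> complex" and F :: "complex \<Rightarrow> complex"
  assumes sm: "\<And>z. norm z < 1 \<Longrightarrow> (\<lambda>k. \<gamma> k * z^k) sums F z"
      and bd: "\<And>z. norm z < 1 \<Longrightarrow> norm (F z) \<le> 1"
  shows "(\<Sum>m\<le>J. (cmod (SJ \<gamma> J y m))^2) \<le> (\<Sum>m\<le>J. (cmod (y m))^2)"
proof -
  have T: "(\<Sum>m\<le>J. (cmod (\<Sum>i\<le>m. \<gamma> i * y (J - (m-i))))^2) \<le> (\<Sum>n\<le>J. (cmod (y (J - n)))^2)"
    by (rule toeplitz_contr[OF sm bd])
  have "(\<Sum>m\<le>J. (cmod (SJ \<gamma> J y m))^2) = (\<Sum>m\<le>J. (cmod (SJ \<gamma> J y (J - m)))^2)"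
    by (rule sum_rev_atMost)
  also have "\<dots> = (\<Sum>m\<le>J. (cmod (\<Sum>i\<le>m. \<gamma> i * y (J - (m-i))))^2)"
  proof (rule sum.cong[OF refl])
    fix m assume "m \<in> {..J}"
    then have m: "m \<le> J" by simp
    have "SJ \<gamma> J y (J - m) = (\<Sum>i\<le>m. \<gamma> i * y (J - (m-i)))"
      unfolding SJ_def using m by (intro sum.cong) auto
    then show "(cmod (SJ \<gamma> J y (J - m)))^2 = (cmod (\<Sum>i\<le>m. \<gamma> i * y (J - (m-i))))^2" by simp
  qed
  also have "\<dots> \<le> (\<Sum>n\<le>J. (cmod (y (J - n)))^2)" by (rule T)
  also have "\<dots> = (\<Sum>m\<le>J. (cmod (y m))^2)" by (rule sum_rev_atMost[symmetric])
  finally show ?thesis .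
qed

definition sj :: "(complex \<Rightarrow> complex) \<Rightarrow> nat \<Rightarrow> real" where
  "sj b j = 1 - (\<Sum>i\<le>j. (cmod (tc b i))^2)"

lemma hinf_sm: "b \<in> Hinf_ball \<Longrightarrow> norm z < 1 \<Longrightarrow> (\<lambda>k. tc b k * z^k) sums b z"
  by (intro tc_sums) (auto simp: Hinf_ball_def)

lemma hinf_bd: "b \<in> Hinf_ball \<Longrightarrow> norm z < 1 \<Longrightarrow> norm (b z) \<le> 1"
  by (auto simp: Hinf_ball_def)

lemma coeff_sq_le:
  fixes \<gamma> :: "nat \<Rightarrow> complex" and F :: "complex \<Rightarrow> complex"
  assumes sm: "\<And>z. norm z < 1 \<Longrightarrow> (\<lambda>k. \<gamma> k * z^k) sums F z"
      and bd: "\<And>z. norm z < 1 \<Longrightarrow> norm (F z) \<le> 1"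
  shows "(\<Sum>m\<le>J. (cmod (\<gamma> m))^2) \<le> 1"
proof -
  define E0 where "E0 = (\<lambda>n::nat. if n = 0 then (1::complex) else 0)"
  have T: "(\<Sum>m\<le>J. (cmod (\<Sum>i\<le>m. \<gamma> i * E0 (m-i)))^2) \<le> (\<Sum>n\<le>J. (cmod (E0 n))^2)"
    by (rule toeplitz_contr[OF sm bd])
  have "(\<Sum>i\<le>m. \<gamma> i * E0 (m-i)) = \<gamma> m" for m
  proof -
    have "(\<Sum>i\<le>m. \<gamma> i * E0 (m-i)) = (\<Sum>i\<le>m. if i = m then \<gamma> m else 0)"
      unfolding E0_def by (intro sum.cong) auto
    then show ?thesis by simp
  qed
  moreover have "(\<Sum>n\<le>J. (cmod (E0 n))^2) = (\<Sum>n\<le>J. if n = 0 then 1 else 0)"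
    by (rule sum.cong) (auto simp: E0_def)
  ultimately show ?thesis using T by simp
qed

lemma sj_nonneg: assumes hb: "b \<in> Hinf_ball" shows "sj b j \<ge> 0"
proof -
  have "(\<Sum>m\<le>j. (cmod (tc b m))^2) \<le> 1" by (rule coeff_sq_le[OF hinf_sm[OF hb] hinf_bd[OF hb]])
  then show ?thesis by (simp add: sj_def)
qed

lemma delta_exists:
  assumes hb: "b \<in> Hinf_ball" and ne: "\<not> Hinf_extreme b"
  shows "\<exists>\<delta>>0. \<forall>j. sj b j \<ge> \<delta>"
proof -
  obtain g h z0 where g: "g \<in> Hinf_ball" and h: "h \<in> Hinf_ball" and z0: "z0 \<in> ball 0 1" "g z0 \<noteq> h z0"
    and avg: "\<And>z. z \<in> ball 0 1 \<Longrightarrow> b z = (g z + h z) / 2"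
    using hb ne unfolding Hinf_extreme_def by blast
  define d where "d k = tc g k - tc b k" for k
  have smg: "(\<lambda>k. (tc b k + d k) * z^k) sums g z" if "norm z < 1" for z
    using hinf_sm[OF g that] by (simp add: d_def)
  have smh: "(\<lambda>k. (tc b k - d k) * z^k) sums h z" if z: "norm z < 1" for z
  proof -
    have A: "(\<lambda>k. 2 * (tc b k * z^k) - tc g k * z^k) sums (2 * b z - g z)"
      by (intro sums_diff sums_mult hinf_sm[OF hb z] hinf_sm[OF g z])
    have "b z * 2 = g z + h z" using avg[of z] z by simp
    then have eq: "2 * b z - g z = h z" by (metis add_diff_cancel_left' mult.commute)
    show ?thesis using A unfolding eq by (simp add: d_def algebra_simps)
  qed
  have Sg: "(\<Sum>m\<le>J. (cmod (tc b m + d m))^2) \<le> 1" for J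
    by (rule coeff_sq_le[OF smg hinf_bd[OF g]])
  have Sh: "(\<Sum>m\<le>J. (cmod (tc b m - d m))^2) \<le> 1" for J
    by (rule coeff_sq_le[OF smh hinf_bd[OF h]])
  have key: "(\<Sum>m\<le>J. (cmod (d m))^2) \<le> sj b J" for J
  proof -
    have "(\<Sum>m\<le>J. 2 * (cmod (tc b m))^2 + 2 * (cmod (d m))^2) \<le> 2"
      using Sg[of J] Sh[of J] unfolding cmod_parallelogram[symmetric] sum.distrib by simp
    then show ?thesis unfolding sj_def sum.distrib sum_distrib_left[symmetric] by simp
  qed
  have "\<exists>m. d m \<noteq> 0"
  proof (rule ccontr)
    assume "\<not> (\<exists>m. d m \<noteq> 0)"
    then have d0: "d k = 0" for k by simp
    have z0n: "norm z0 < 1" using z0 by simp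
    have "(\<lambda>k. tc b k * z0 ^ k) sums g z0" using smg[OF z0n] d0 by simp
    then have e1: "g z0 = b z0" using sums_unique2 hinf_sm[OF hb z0n] by blast
    have "(\<lambda>k. tc b k * z0 ^ k) sums h z0" using smh[OF z0n] d0 by simp
    then have e2: "h z0 = b z0" using sums_unique2 hinf_sm[OF hb z0n] by blast
    from e1 e2 show False using z0 by simp
  qed
  then obtain m where m: "d m \<noteq> 0" by blast
  show ?thesis
  proof (intro exI[of _ "(cmod (d m))^2"] conjI allI)
    show "0 < (cmod (d m))^2" using m by simp
    fix j
    define J where "J = max j m"
    have "(cmod (d m))^2 \<le> (\<Sum>i\<le>J. (cmod (d i))^2)"
      by (rule member_le_sum) (auto simp: J_def)
    also have "\<dots> \<le> sj b J" by (rule key)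
    also have "sj b J \<le> sj b j"
      unfolding sj_def by (simp add: J_def sum_mono2)
    finally show "(cmod (d m))^2 \<le> sj b j" .
  qed
qed

lemma member_ineq:
  assumes hb: "b \<in> Hinf_ball" and p: "\<And>i. i < n \<Longrightarrow> norm (p i) < 1" and spos: "sj b j > 0"
  shows "(cmod (\<Sum>i<n. c i * k0j b j (p i)))^2
          \<le> sj b j * ((\<Sum>m. (cmod (xs n c p m))^2) - (\<Sum>m. (cmod (vs b n c p m))^2))"
proof -
  have hol: "b holomorphic_on ball 0 1" using hb by (simp add: Hinf_ball_def)
  define x where "x = xs n c p"
  define v where "v = vs b n c p"
  define \<gamma> where "\<gamma> = tc b"
  define E where "E = (\<lambda>m::nat. if m = j then (1::complex) else 0)"
  define G' where "G' = x j - (\<Sum>m\<le>j. v m * cnj (\<gamma> (j-m)))"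
  have X2: "summable (\<lambda>m. (cmod (x m))^2)" unfolding x_def by (rule Qid(1)[OF p])
  have V2: "summable (\<lambda>m. (cmod (v m))^2)" unfolding v_def by (rule Qid(2)[OF p])
  have SJlin: "SJ \<gamma> J (\<lambda>m. x m + t * E m) m = SJ \<gamma> J x m + t * SJ \<gamma> J E m" for J t m
    by (simp add: SJ_def algebra_simps sum.distrib sum_distrib_left)
  have SJE: "SJ \<gamma> J E m = (if m \<le> j then \<gamma> (j - m) else 0)" if J: "J \<ge> j" for J m
  proof (cases "m \<le> j")
    case True
    have "SJ \<gamma> J E m = (\<Sum>k\<le>J-m. if k = j - m then \<gamma> k else 0)"
      unfolding SJ_def E_def using True by (intro sum.cong) auto
    also have "\<dots> = \<gamma> (j - m)" using True J by simp
    finally show ?thesis using True by simp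
  next
    case False
    have "SJ \<gamma> J E m = (\<Sum>k\<le>J-m. 0)"
      unfolding SJ_def E_def using False by (intro sum.cong) auto
    then show ?thesis using False by simp
  qed
  have fin: "(cmod (x j - (\<Sum>m\<le>j. SJ \<gamma> J x m * cnj (\<gamma> (j-m)))))^2
      \<le> sj b j * ((\<Sum>m\<le>J. (cmod (x m))^2) - (\<Sum>m\<le>J. (cmod (SJ \<gamma> J x m))^2))" if J: "J \<ge> j" for J
  proof -
    have pos: "0 \<le> (\<Sum>m\<in>{..J}. (cmod (x m + t * E m))^2) - (\<Sum>m\<in>{..J}. (cmod (SJ \<gamma> J x m + t * SJ \<gamma> J E m))^2)" for t
      using SJ_contr[OF hinf_sm[OF hb] hinf_bd[OF hb], of J "\<lambda>m. x m + t * E m"]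
      unfolding \<gamma>_def[symmetric] SJlin by simp
    have E1: "(\<Sum>m\<in>{..J}. (cmod (E m))^2) = 1"
    proof -
      have "(\<Sum>m\<in>{..J}. (cmod (E m))^2) = (\<Sum>m\<in>{..J}. if m = j then 1 else 0)"
        by (rule sum.cong) (auto simp: E_def)
      then show ?thesis using J by simp
    qed
    have E2: "(\<Sum>m\<in>{..J}. (cmod (SJ \<gamma> J E m))^2) = (\<Sum>i\<le>j. (cmod (tc b i))^2)"
    proof -
      have "(\<Sum>m\<in>{..J}. (cmod (SJ \<gamma> J E m))^2) = (\<Sum>m\<in>{..J}. if m \<le> j then (cmod (\<gamma> (j-m)))^2 else 0)"
        by (rule sum.cong) (auto simp: SJE[OF J])
      also have "\<dots> = (\<Sum>m\<in>{..j}. (cmod (\<gamma> (j-m)))^2)"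
        by (rule sum.mono_neutral_cong_right) (use J in auto)
      also have "\<dots> = (\<Sum>i\<le>j. (cmod (tc b i))^2)"
        unfolding \<gamma>_def by (rule sum_rev_atMost[symmetric])
      finally show ?thesis .
    qed
    have s: "sj b j = (\<Sum>m\<in>{..J}. (cmod (E m))^2) - (\<Sum>m\<in>{..J}. (cmod (SJ \<gamma> J E m))^2)"
      unfolding E1 E2 sj_def ..
    have C1: "(\<Sum>m\<in>{..J}. x m * cnj (E m)) = x j"
    proof -
      have "(\<Sum>m\<in>{..J}. x m * cnj (E m)) = (\<Sum>m\<in>{..J}. if m = j then x j else 0)"
        by (rule sum.cong) (auto simp: E_def)
      then show ?thesis using J by simp
    qed
    have C2: "(\<Sum>m\<in>{..J}. SJ \<gamma> J x m * cnj (SJ \<gamma> J E m)) = (\<Sum>m\<le>j. SJ \<gamma> J x m * cnj (\<gamma> (j-m)))"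
    proof -
      have "(\<Sum>m\<in>{..J}. SJ \<gamma> J x m * cnj (SJ \<gamma> J E m)) = (\<Sum>m\<in>{..J}. if m \<le> j then SJ \<gamma> J x m * cnj (\<gamma> (j-m)) else 0)"
        by (rule sum.cong) (auto simp: SJE[OF J])
      also have "\<dots> = (\<Sum>m\<in>{..j}. SJ \<gamma> J x m * cnj (\<gamma> (j-m)))"
        by (rule sum.mono_neutral_cong_right) (use J in auto)
      finally show ?thesis by simp
    qed
    show ?thesis using cs_form[OF pos s spos] unfolding C1 C2 .
  qed
  have SJlim: "(\<lambda>J. SJ \<gamma> J x m) \<longlonglongrightarrow> v m" for m
  proof -
    have eq: "SJ \<gamma> J x m = (\<Sum>i<n. c i * p i ^ m * (\<Sum>k<Suc (J - m). \<gamma> k * p i ^ k))" for J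
    proof -
      have "SJ \<gamma> J x m = (\<Sum>k\<le>J-m. \<Sum>i<n. \<gamma> k * (c i * p i ^ (m+k)))"
        unfolding SJ_def x_def xs_def by (simp only: sum_distrib_left)
      also have "\<dots> = (\<Sum>i<n. \<Sum>k\<le>J-m. \<gamma> k * (c i * p i ^ (m+k)))"
        by (rule sum.swap)
      also have "\<dots> = (\<Sum>i<n. c i * p i ^ m * (\<Sum>k<Suc (J - m). \<gamma> k * p i ^ k))"
        unfolding lessThan_Suc_atMost sum_distrib_left
        by (intro sum.cong refl) (simp add: power_add mult_ac)
      finally show ?thesis .
    qed
    have lim_i: "(\<lambda>J. \<Sum>k<Suc (J - m). \<gamma> k * p i ^ k) \<longlonglongrightarrow> b (p i)" if i: "i < n" for i
    proof -
      have "(\<lambda>K. \<Sum>k<K. \<gamma> k * p i ^ k) \<longlonglongrightarrow> b (p i)"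
        using hinf_sm[OF hb p[OF i]] unfolding \<gamma>_def sums_def .
      moreover have "filterlim (\<lambda>J. Suc (J - m)) sequentially sequentially"
        by (rule filterlim_compose[OF filterlim_Suc filterlim_minus_const_nat_at_top])
      ultimately show ?thesis by (rule filterlim_compose)
    qed
    have "(\<lambda>J. \<Sum>i<n. c i * p i ^ m * (\<Sum>k<Suc (J - m). \<gamma> k * p i ^ k)) \<longlonglongrightarrow> (\<Sum>i<n. c i * p i ^ m * b (p i))"
      by (intro tendsto_sum tendsto_mult_left lim_i) simp
    moreover have "(\<Sum>i<n. c i * p i ^ m * b (p i)) = v m"
      unfolding v_def vs_def by (simp add: mult_ac)
    ultimately show ?thesis unfolding eq by simp
  qed
  have step1: "(cmod G')^2 \<le> sj b j * ((\<Sum>m. (cmod (x m))^2) - (\<Sum>m\<le>J0. (cmod (v m))^2))" for J0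
  proof (rule LIMSEQ_le)
    show "(\<lambda>J. (cmod (x j - (\<Sum>m\<le>j. SJ \<gamma> J x m * cnj (\<gamma> (j-m)))))^2) \<longlonglongrightarrow> (cmod G')^2"
      unfolding G'_def by (intro tendsto_intros SJlim)
    show "(\<lambda>J. sj b j * ((\<Sum>m. (cmod (x m))^2) - (\<Sum>m\<le>J0. (cmod (SJ \<gamma> J x m))^2)))
        \<longlonglongrightarrow> sj b j * ((\<Sum>m. (cmod (x m))^2) - (\<Sum>m\<le>J0. (cmod (v m))^2))"
      by (intro tendsto_intros SJlim)
    show "\<exists>N. \<forall>J\<ge>N. (cmod (x j - (\<Sum>m\<le>j. SJ \<gamma> J x m * cnj (\<gamma> (j-m)))))^2
        \<le> sj b j * ((\<Sum>m. (cmod (x m))^2) - (\<Sum>m\<le>J0. (cmod (SJ \<gamma> J x m))^2))"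
    proof (intro exI[of _ "max j J0"] allI impI)
      fix J assume J: "J \<ge> max j J0"
      have a1: "(\<Sum>m\<le>J. (cmod (x m))^2) \<le> (\<Sum>m. (cmod (x m))^2)"
        by (rule sum_le_suminf[OF X2]) auto
      have a2: "(\<Sum>m\<le>J0. (cmod (SJ \<gamma> J x m))^2) \<le> (\<Sum>m\<le>J. (cmod (SJ \<gamma> J x m))^2)"
        by (rule sum_mono2) (use J in auto)
      have "(cmod (x j - (\<Sum>m\<le>j. SJ \<gamma> J x m * cnj (\<gamma> (j-m)))))^2
          \<le> sj b j * ((\<Sum>m\<le>J. (cmod (x m))^2) - (\<Sum>m\<le>J. (cmod (SJ \<gamma> J x m))^2))"
        using fin J by simp
      also have "\<dots> \<le> sj b j * ((\<Sum>m. (cmod (x m))^2) - (\<Sum>m\<le>J0. (cmod (SJ \<gamma> J x m))^2))"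
        using a1 a2 spos by (intro mult_left_mono) auto
      finally show "(cmod (x j - (\<Sum>m\<le>j. SJ \<gamma> J x m * cnj (\<gamma> (j-m)))))^2
        \<le> sj b j * ((\<Sum>m. (cmod (x m))^2) - (\<Sum>m\<le>J0. (cmod (SJ \<gamma> J x m))^2))" .
    qed
  qed
  have main: "(cmod G')^2 \<le> sj b j * ((\<Sum>m. (cmod (x m))^2) - (\<Sum>m. (cmod (v m))^2))"
  proof (rule LIMSEQ_le_const)
    have "(\<lambda>J0. \<Sum>m<Suc J0. (cmod (v m))^2) \<longlonglongrightarrow> (\<Sum>m. (cmod (v m))^2)"
      by (rule LIMSEQ_Suc[OF summable_LIMSEQ[OF V2]])
    then show "(\<lambda>J0. sj b j * ((\<Sum>m. (cmod (x m))^2) - (\<Sum>m\<le>J0. (cmod (v m))^2)))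
        \<longlonglongrightarrow> sj b j * ((\<Sum>m. (cmod (x m))^2) - (\<Sum>m. (cmod (v m))^2))"
      unfolding lessThan_Suc_atMost by (intro tendsto_intros)
    show "\<exists>N. \<forall>J0\<ge>N. (cmod G')^2 \<le> sj b j * ((\<Sum>m. (cmod (x m))^2) - (\<Sum>m\<le>J0. (cmod (v m))^2))"
      using step1 by blast
  qed
  have "(\<Sum>i<n. c i * k0j b j (p i)) = x j - (\<Sum>l\<le>j. cnj (tc b l) * v (j-l))"
    unfolding Gid[OF hol] x_def v_def ..
  also have "(\<Sum>l\<le>j. cnj (tc b l) * v (j-l)) = (\<Sum>l\<le>j. v (j - l) * cnj (\<gamma> (j - (j - l))))"
    by (intro sum.cong refl) (simp add: \<gamma>_def mult.commute)
  also have "\<dots> = (\<Sum>m\<le>j. v m * cnj (\<gamma> (j-m)))"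
    by (rule sum_rev_atMost[symmetric])
  finally have "(\<Sum>i<n. c i * k0j b j (p i)) = G'" unfolding G'_def .
  then show ?thesis using main by (simp add: x_def v_def)
qed

lemma pow_swap: "(z^l)^m = (z^m)^l" for z :: complex
  by (simp only: power_mult[symmetric] mult.commute)

lemma avg_limit:
  assumes hb: "b \<in> Hinf_ball" and N: "j < N" and n: "n \<le> j"
  shows "((\<lambda>\<rho>::real. complex_of_real (\<rho>^n) / (of_nat N * complex_of_real \<rho> ^ j)
            * (\<Sum>l<N. b (complex_of_real \<rho> * om N ^ l) * (om N ^ n * cnj (om N) ^ j)^l))
          \<longlongrightarrow> tc b (j - n)) (at_right 0)"
proof -
  define d where "d = j - n"
  define q where "q = om N ^ n * cnj (om N) ^ j"
  define A where "A k = (\<Sum>l<N. (om N ^ (k + n) * cnj (om N) ^ j)^l) / of_nat N" for k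
  define h where "h w = (\<Sum>l<N. b (w * om N ^ l) * q^l) / of_nat N" for w
  have N1: "N \<ge> 1" using N by simp
  have A0: "A k = 0" if "k < d" for k
    unfolding A_def using root_orth[OF N1, of "k+n" j] that N n by (simp add: d_def)
  have Ad: "A d = 1"
    unfolding A_def using root_orth[OF N1, of "d+n" j] N n N1 by (simp add: d_def)
  have hs: "(\<lambda>k. tc b k * A k * w^k) sums h w" if w: "norm w < 1" for w
  proof -
    have "(\<lambda>k. \<Sum>l<N. tc b k * (w * om N ^ l)^k * (q^l / of_nat N))
            sums (\<Sum>l<N. b (w * om N ^ l) * (q^l / of_nat N))"
    proof (intro sums_sum sums_mult2 hinf_sm[OF hb])
      fix l show "norm (w * om N ^ l) < 1" using w by (simp add: norm_mult)
    qed
    moreover have "(\<Sum>l<N. tc b k * (w * om N ^ l)^k * (q^l / of_nat N)) = tc b k * A k * w^k" for k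
    proof -
      have "(\<Sum>l<N. tc b k * (w * om N ^ l)^k * (q^l / of_nat N))
          = tc b k * w^k * (\<Sum>l<N. (om N ^ k * q)^l) / of_nat N"
        by (simp add: sum_distrib_left sum_divide_distrib power_mult_distrib pow_swap mult_ac)
      also have "om N ^ k * q = om N ^ (k + n) * cnj (om N) ^ j"
        by (simp add: q_def power_add mult_ac)
      finally show ?thesis by (simp add: A_def mult_ac)
    qed
    moreover have "(\<Sum>l<N. b (w * om N ^ l) * (q^l / of_nat N)) = h w"
      by (simp add: h_def sum_divide_distrib)
    ultimately show ?thesis by simp
  qed
  have hs2: "(\<lambda>k. tc b (k + d) * A (k + d) * w^k) sums (h w / w^d)" if w: "w \<noteq> 0" "norm w < 1" for w
  proof -
    have "(\<lambda>k. tc b (k + d) * A (k + d) * w^(k + d)) sums h w"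
      using hs[OF w(2)] sums_zero_iff_shift[of d "\<lambda>k. tc b k * A k * w^k" "h w"] A0 by simp
    then have "(\<lambda>k. tc b (k + d) * A (k + d) * w^(k + d) / w^d) sums (h w / w^d)"
      by (rule sums_divide)
    moreover have "tc b (k + d) * A (k + d) * w^(k + d) / w^d = tc b (k + d) * A (k + d) * w^k" for k
      using w by (simp add: power_add)
    ultimately show ?thesis by simp
  qed
  have lim: "((\<lambda>w. h w / w^d) \<longlongrightarrow> tc b d) (at 0)"
    using powser_limit_0_strong[of 1 "\<lambda>k. tc b (k+d) * A (k+d)" "\<lambda>w. h w / w^d"] hs2 Ad by simp
  have ofr: "filterlim (\<lambda>\<rho>::real. complex_of_real \<rho>) (at 0) (at_right 0)"
    unfolding filterlim_at
  proof
    show "\<forall>\<^sub>F \<rho> in at_right 0. complex_of_real \<rho> \<in> UNIV \<and> complex_of_real \<rho> \<noteq> 0"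
      using eventually_at_right_less[of "0::real"] by eventually_elim simp
    have "((\<lambda>\<rho>::real. \<rho>) \<longlongrightarrow> 0) (at_right 0)" by (rule tendsto_ident_at)
    then show "((\<lambda>\<rho>::real. complex_of_real \<rho>) \<longlongrightarrow> 0) (at_right 0)"
      using tendsto_of_real by fastforce
  qed
  have lim2: "((\<lambda>\<rho>::real. h (of_real \<rho>) / (of_real \<rho>)^d) \<longlongrightarrow> tc b d) (at_right 0)"
    using filterlim_compose[OF lim ofr] by simp
  have ev: "\<forall>\<^sub>F \<rho> in at_right 0. h (of_real \<rho>) / (of_real \<rho>)^d =
      complex_of_real (\<rho>^n) / (of_nat N * complex_of_real \<rho> ^ j)
            * (\<Sum>l<N. b (complex_of_real \<rho> * om N ^ l) * (om N ^ n * cnj (om N) ^ j)^l)"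
    using eventually_at_right_less[of "0::real"]
  proof eventually_elim
    case (elim \<rho>)
    have j: "j = n + d" using n by (simp add: d_def)
    show ?case using elim N1 unfolding h_def q_def j
      by (simp add: power_add field_simps)
  qed
  show ?thesis using tendsto_cong[OF ev] lim2 by (simp add: d_def)
qed

lemma form_split:
  fixes c :: "nat \<Rightarrow> complex" and f :: "complex \<Rightarrow> complex"
  shows "(\<Sum>i<n. \<Sum>k<n. c i * cnj (c k) * (a * K (p i) (p k) - f (p i) * cnj (f (p k))))
       = a * (\<Sum>i<n. \<Sum>k<n. c i * cnj (c k) * K (p i) (p k))
         - (\<Sum>i<n. c i * f (p i)) * cnj (\<Sum>i<n. c i * f (p i))"
proof -
  have "(\<Sum>i<n. c i * f (p i)) * cnj (\<Sum>i<n. c i * f (p i))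
      = (\<Sum>i<n. \<Sum>k<n. c i * cnj (c k) * (f (p i) * cnj (f (p k))))"
    unfolding cnj_sum sum_product by (intro sum.cong refl) (simp add: mult_ac)
  then show ?thesis
    by (simp add: sum_distrib_left right_diff_distrib sum_subtractf mult_ac)
qed

lemma lower_bound:
  assumes hb: "b \<in> Hinf_ball" and adm: "C \<in> rk_admissible (dBR_kernel b) (k0j b j)" and spos: "sj b j > 0"
  shows "sj b j \<le> C^2"
proof -
  have hol: "b holomorphic_on ball 0 1" using hb by (simp add: Hinf_ball_def)
  have C0: "C \<ge> 0" and pk: "pos_kernel_disc (\<lambda>z w. complex_of_real (C^2) * dBR_kernel b z w - k0j b j z * cnj (k0j b j w))"
    using adm by (auto simp: rk_admissible_def)
  define N where "N = Suc j"
  define pp where "pp \<rho> l = complex_of_real \<rho> * om N ^ l" for \<rho> :: real and l :: nat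
  define cc where "cc \<rho> l = (cnj (om N) ^ j)^l / (of_nat N * complex_of_real \<rho> ^ j)" for \<rho> :: real and l :: nat
  define v where "v \<rho> m = vs b N (cc \<rho>) (pp \<rho>) m" for \<rho> m
  define x where "x \<rho> m = xs N (cc \<rho>) (pp \<rho>) m" for \<rho> m
  define G where "G \<rho> = (\<Sum>l<N. cc \<rho> l * k0j b j (pp \<rho> l))" for \<rho>
  have N1: "N \<ge> 1" and jN: "j < N" by (simp_all add: N_def)
  have vform: "v \<rho> m = complex_of_real (\<rho>^m) / (of_nat N * complex_of_real \<rho> ^ j)
            * (\<Sum>l<N. b (complex_of_real \<rho> * om N ^ l) * (om N ^ m * cnj (om N) ^ j)^l)" for \<rho> m
    unfolding v_def vs_def cc_def pp_def
    by (simp add: sum_distrib_left power_mult_distrib pow_swap mult_ac)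
  have xform: "x \<rho> m = complex_of_real (\<rho>^m) / (of_nat N * complex_of_real \<rho> ^ j)
            * (\<Sum>l<N. (om N ^ m * cnj (om N) ^ j)^l)" for \<rho> m
    unfolding x_def xs_def cc_def pp_def
    by (simp add: sum_distrib_left power_mult_distrib pow_swap mult_ac)
  have xj: "x \<rho> j = 1" if "\<rho> > 0" for \<rho>
    unfolding xform root_orth[OF N1 jN jN] using that N1 by simp
  have xlt: "x \<rho> m = 0" if "m < j" for \<rho> m
    unfolding xform using root_orth[OF N1, of m j] that jN by simp
  have xbd: "cmod (x \<rho> m) \<le> \<rho>^(m-j)" if r: "\<rho> > 0" and m: "m \<ge> j" for \<rho> m
  proof -
    have "cmod (\<Sum>l<N. (om N ^ m * cnj (om N) ^ j)^l) \<le> (\<Sum>l<N. cmod ((om N ^ m * cnj (om N) ^ j)^l))"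
      by (rule norm_sum)
    also have "\<dots> = real N" by (simp add: norm_mult norm_power)
    finally have S: "cmod (\<Sum>l<N. (om N ^ m * cnj (om N) ^ j)^l) \<le> real N" .
    have "cmod (x \<rho> m) = \<rho>^m / (real N * \<rho>^j) * cmod (\<Sum>l<N. (om N ^ m * cnj (om N) ^ j)^l)"
      unfolding xform using r by (simp add: norm_mult norm_divide norm_power)
    also have "\<dots> \<le> \<rho>^m / (real N * \<rho>^j) * real N"
      using S r by (intro mult_left_mono) auto
    also have "\<dots> = \<rho>^m / \<rho>^j" using N1 by simp
    also have "\<dots> = \<rho>^(m-j)" using r m by (simp add: power_diff)
    finally show ?thesis .
  qed
  have pts: "norm (pp \<rho> i) < 1" if "0 < \<rho>" "\<rho> < 1" for \<rho> i
    using that by (simp add: pp_def norm_mult)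
  have X2bd: "(\<Sum>m. (cmod (x \<rho> m))^2) \<le> 1 / (1 - \<rho>^2)" if r: "0 < \<rho>" "\<rho> < 1" for \<rho>
  proof -
    define g where "g m = (if m < j then 0 else (\<rho>^2)^(m-j))" for m
    have "(\<lambda>i. (\<rho>^2)^i) sums (1 / (1 - \<rho>^2))"
      by (rule geometric_sums) (use r in \<open>simp add: abs_less_iff power_less_one_iff\<close>)
    then have "(\<lambda>i. g (i + j)) sums (1 / (1 - \<rho>^2))" by (simp add: g_def)
    then have gs: "g sums (1 / (1 - \<rho>^2))"
      by (subst (asm) sums_zero_iff_shift) (auto simp: g_def)
    have xs2: "summable (\<lambda>m. (cmod (x \<rho> m))^2)"
      unfolding x_def by (rule Qid(1)) (use pts r in auto)
    have "(\<Sum>m. (cmod (x \<rho> m))^2) \<le> (\<Sum>m. g m)"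
    proof (rule suminf_le[OF _ xs2 sums_summable[OF gs]])
      fix m show "(cmod (x \<rho> m))^2 \<le> g m"
      proof (cases "m < j")
        case True then show ?thesis by (simp add: xlt g_def)
      next
        case False
        then have "(cmod (x \<rho> m))^2 \<le> (\<rho>^(m-j))^2"
          using xbd[OF r(1)] by (intro power_mono) auto
        also have "\<dots> = (\<rho>^2)^(m-j)" by (simp add: power_mult[symmetric] mult.commute)
        finally show ?thesis using False by (simp add: g_def)
      qed
    qed
    then show ?thesis using gs by (simp add: sums_iff)
  qed
  have ineq: "(cmod (G \<rho>))^2 \<le> C^2 * (1 / (1 - \<rho>^2) - (\<Sum>n\<le>j. (cmod (v \<rho> n))^2))" if r: "0 < \<rho>" "\<rho> < 1" for \<rho>
  proof -
    have p': "\<And>i. i < N \<Longrightarrow> norm (pp \<rho> i) < 1" using pts r by auto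
    define s where "s = (\<Sum>i<N. \<Sum>k<N. cc \<rho> i * cnj (cc \<rho> k) *
        (complex_of_real (C^2) * dBR_kernel b (pp \<rho> i) (pp \<rho> k) - k0j b j (pp \<rho> i) * cnj (k0j b j (pp \<rho> k))))"
    have "Re s \<ge> 0"
      using pk p' unfolding pos_kernel_disc_def Let_def s_def by auto
    moreover have "s = complex_of_real (C^2) * complex_of_real ((\<Sum>m. (cmod (x \<rho> m))^2) - (\<Sum>m. (cmod (v \<rho> m))^2))
        - (complex_of_real (cmod (G \<rho>)))^2"
    proof -
      have Q: "(\<Sum>i<N. \<Sum>k<N. cc \<rho> i * cnj (cc \<rho> k) * dBR_kernel b (pp \<rho> i) (pp \<rho> k))
          = complex_of_real ((\<Sum>m. (cmod (x \<rho> m))^2) - (\<Sum>m. (cmod (v \<rho> m))^2))"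
        unfolding x_def v_def by (rule Qid(3)[OF p'])
      show ?thesis unfolding s_def form_split Q G_def mult_cnj_sq ..
    qed
    ultimately have A: "(cmod (G \<rho>))^2 \<le> C^2 * ((\<Sum>m. (cmod (x \<rho> m))^2) - (\<Sum>m. (cmod (v \<rho> m))^2))"
      by simp
    have vs2: "summable (\<lambda>m. (cmod (v \<rho> m))^2)"
      unfolding v_def by (rule Qid(2)[OF p'])
    have B: "(\<Sum>n\<le>j. (cmod (v \<rho> n))^2) \<le> (\<Sum>m. (cmod (v \<rho> m))^2)"
      by (rule sum_le_suminf[OF vs2]) auto
    have "C^2 * ((\<Sum>m. (cmod (x \<rho> m))^2) - (\<Sum>m. (cmod (v \<rho> m))^2))
        \<le> C^2 * (1 / (1 - \<rho>^2) - (\<Sum>n\<le>j. (cmod (v \<rho> n))^2))"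
      using X2bd[OF r] B by (intro mult_left_mono) auto
    with A show ?thesis by linarith
  qed
  have Gform: "G \<rho> = 1 - (\<Sum>l\<le>j. cnj (tc b l) * v \<rho> (j - l))" if "\<rho> > 0" for \<rho>
    unfolding G_def Gid[OF hol] xj[OF that, unfolded x_def] v_def ..
  have vlim: "((\<lambda>\<rho>. v \<rho> n) \<longlongrightarrow> tc b (j - n)) (at_right 0)" if "n \<le> j" for n
    unfolding vform by (rule avg_limit[OF hb jN that])
  have vlim': "((\<lambda>\<rho>. v \<rho> (j - l)) \<longlongrightarrow> tc b l) (at_right 0)" if "l \<le> j" for l
    using vlim[of "j - l"] that by simp
  have L1: "((\<lambda>\<rho>. (cmod (1 - (\<Sum>l\<le>j. cnj (tc b l) * v \<rho> (j - l))))^2)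
      \<longlongrightarrow> (cmod (1 - (\<Sum>l\<le>j. cnj (tc b l) * tc b (j - (j - l)))))^2) (at_right 0)"
    by (intro tendsto_intros tendsto_sum) (auto intro: vlim vlim')
  have L2: "((\<lambda>\<rho>. C^2 * (1 / (1 - \<rho>^2) - (\<Sum>n\<le>j. (cmod (v \<rho> n))^2)))
      \<longlongrightarrow> C^2 * (1 / (1 - 0^2) - (\<Sum>n\<le>j. (cmod (tc b (j - n)))^2))) (at_right 0)"
    by (intro tendsto_intros tendsto_sum tendsto_ident_at) (auto intro: vlim)
  have ev: "\<forall>\<^sub>F \<rho> in at_right 0. (cmod (1 - (\<Sum>l\<le>j. cnj (tc b l) * v \<rho> (j - l))))^2
      \<le> C^2 * (1 / (1 - \<rho>^2) - (\<Sum>n\<le>j. (cmod (v \<rho> n))^2))"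
  proof -
    have "eventually (\<lambda>\<rho>. \<rho> \<in> {0<..<1}) (at_right (0::real))"
      by (rule eventually_at_right_real) simp
    then show ?thesis
    proof eventually_elim
      case (elim \<rho>)
      then show ?case using ineq[of \<rho>] Gform[of \<rho>] by simp
    qed
  qed
  have lim: "(cmod (1 - (\<Sum>l\<le>j. cnj (tc b l) * tc b (j - (j - l)))))^2
       \<le> C^2 * (1 / (1 - 0^2) - (\<Sum>n\<le>j. (cmod (tc b (j - n)))^2))"
    by (rule tendsto_le[OF trivial_limit_at_right_real L2 L1 ev])
  have e1: "(\<Sum>l\<le>j. cnj (tc b l) * tc b (j - (j - l))) = complex_of_real (\<Sum>l\<le>j. (cmod (tc b l))^2)"
    unfolding of_real_sum
  proof (rule sum.cong[OF refl])
    fix l assume "l \<in> {..j}"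
    then have "j - (j - l) = l" by simp
    then show "cnj (tc b l) * tc b (j - (j - l)) = complex_of_real ((cmod (tc b l))^2)"
      by (metis complex_norm_square mult.commute)
  qed
  have e2: "(\<Sum>n\<le>j. (cmod (tc b (j - n)))^2) = (\<Sum>l\<le>j. (cmod (tc b l))^2)"
    by (rule sum_rev_atMost[symmetric])
  have "cmod (1 - complex_of_real (\<Sum>l\<le>j. (cmod (tc b l))^2)) = sj b j"
  proof -
    have "1 - complex_of_real (\<Sum>l\<le>j. (cmod (tc b l))^2) = complex_of_real (sj b j)"
      by (simp add: sj_def)
    then show ?thesis using spos by simp
  qed
  with lim have "(sj b j)^2 \<le> C^2 * sj b j" unfolding e1 e2 by (simp add: sj_def)
  then have "sj b j * sj b j \<le> C^2 * sj b j" by (simp add: power2_eq_square)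
  then show ?thesis using spos by simp
qed

theorem proposition6p8:
  fixes b :: "complex \<Rightarrow> complex"
  assumes "b \<in> Hinf_ball" and "\<not> Hinf_extreme b"
  shows "(\<forall>j. k0j b j \<in> rkhs_space (dBR_kernel b)) \<and>
         (INF j. rkhs_norm (dBR_kernel b) (k0j b j)) > 0"
proof -
  have hb: "b \<in> Hinf_ball" by (rule assms(1))
  obtain \<delta> where \<delta>: "\<delta> > 0" "\<And>j. sj b j \<ge> \<delta>" using delta_exists[OF assms] by blast
  have spos: "sj b j > 0" for j using \<delta>[of] less_le_trans by blast
  have adm: "sqrt (sj b j) \<in> rk_admissible (dBR_kernel b) (k0j b j)" for j
  proof -
    have sq: "(sqrt (sj b j))^2 = sj b j" using spos[of j] by simp
    have "pos_kernel_disc (\<lambda>z w. complex_of_real (sj b j) * dBR_kernel b z w - k0j b j z * cnj (k0j b j w))"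
      unfolding pos_kernel_disc_def Let_def
    proof (intro allI impI)
      fix n :: nat and p c :: "nat \<Rightarrow> complex"
      assume p: "\<forall>i<n. p i \<in> ball 0 1"
      then have p': "\<And>i. i < n \<Longrightarrow> norm (p i) < 1" by auto
      define s where "s = (\<Sum>i<n. \<Sum>k<n. c i * cnj (c k) *
         (complex_of_real (sj b j) * dBR_kernel b (p i) (p k) - k0j b j (p i) * cnj (k0j b j (p k))))"
      have "s = complex_of_real (sj b j) * complex_of_real ((\<Sum>m. (cmod (xs n c p m))^2) - (\<Sum>m. (cmod (vs b n c p m))^2))
          - (complex_of_real (cmod (\<Sum>i<n. c i * k0j b j (p i))))^2"
      proof -
        have Q: "(\<Sum>i<n. \<Sum>k<n. c i * cnj (c k) * dBR_kernel b (p i) (p k))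
            = complex_of_real ((\<Sum>m. (cmod (xs n c p m))^2) - (\<Sum>m. (cmod (vs b n c p m))^2))"
          by (rule Qid(3)[OF p'])
        show ?thesis unfolding s_def form_split Q mult_cnj_sq ..
      qed
      also have "\<dots> = complex_of_real (sj b j * ((\<Sum>m. (cmod (xs n c p m))^2) - (\<Sum>m. (cmod (vs b n c p m))^2))
          - (cmod (\<Sum>i<n. c i * k0j b j (p i)))^2)"
        by simp
      finally have seq: "s = \<dots>" .
      have "(cmod (\<Sum>i<n. c i * k0j b j (p i)))^2
          \<le> sj b j * ((\<Sum>m. (cmod (xs n c p m))^2) - (\<Sum>m. (cmod (vs b n c p m))^2))"
        by (rule member_ineq[OF hb p' spos])
      then show "Im s = 0 \<and> 0 \<le> Re s" unfolding seq by simp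
    qed
    then show ?thesis unfolding rk_admissible_def sq mem_Collect_eq using spos[of j] by simp
  qed
  have nb: "sqrt \<delta> \<le> rkhs_norm (dBR_kernel b) (k0j b j)" for j
    unfolding rkhs_norm_def
  proof (rule cInf_greatest)
    show "rk_admissible (dBR_kernel b) (k0j b j) \<noteq> {}" using adm by blast
    fix C assume C: "C \<in> rk_admissible (dBR_kernel b) (k0j b j)"
    then have C0: "C \<ge> 0" by (simp add: rk_admissible_def)
    have "sj b j \<le> C^2" by (rule lower_bound[OF hb C spos])
    then have "sqrt (sj b j) \<le> sqrt (C^2)" by (rule real_sqrt_le_mono)
    also have "sqrt (C^2) = C" using C0 by simp
    finally have "sqrt (sj b j) \<le> C" .
    moreover have "sqrt \<delta> \<le> sqrt (sj b j)" using \<delta>(2)[of j] by (rule real_sqrt_le_mono)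
    ultimately show "sqrt \<delta> \<le> C" by linarith
  qed
  show ?thesis
  proof
    show "\<forall>j. k0j b j \<in> rkhs_space (dBR_kernel b)"
      using adm by (auto simp: rkhs_space_def)
    have "sqrt \<delta> \<le> (INF j. rkhs_norm (dBR_kernel b) (k0j b j))"
      by (rule cINF_greatest) (auto intro: nb)
    moreover have "sqrt \<delta> > 0" using \<delta>(1) by simp
    ultimately show "(INF j. rkhs_norm (dBR_kernel b) (k0j b j)) > 0" by linarith
  qed
qed

end
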